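(* For every integer $k\ge2$ there are constants $a=a(k)>0$ and $C'=C'(k)$ such that the following holds. Let $d=d(n)$ be a positive integer, $M=nd/k$, and $\epsilon=\epsilon(n)\in(0,1)$ such that $(1-\epsilon)M$ is an integer and \[ C' \left( \left(\frac{d}{n^{k-1}} + \frac{\log n}{d}\right)^{1/3} + \frac1n\right) \le \epsilon < 1 . \] Let $(\eta_1,\dots,\eta_M)$ be the regular $k$-graph process, and for $v\in[n]$ and $t=0,\dots,M$ let $X_t(v)=|\{i\in(t,M] : v\in \eta_i\}|$ and $\tau=1-t/M$. Then asymptotically almost surely, for all integers $0\le t\le(1-\epsilon)M$ and all $v\in[n]$, \[ |X_t(v)-\tau d| \le \sqrt{a\tau d \log n} \le \tau d/2 - 1 . \]
   Context: A $k$-graph on $[n]$ is a family of $k$-element subsets (edges) of $[n]$; it is $d$-regular if each vertex lies in exactly $d$ edges; $k$ divides $nd$ is assumed. The regular $k$-graph process: choose a $d$-regular $k$-graph on $[n]$ uniformly at random and an ordering $(\eta_1,\dots,\eta_M)$ of its $M=nd/k$ edges uniformly at random. Asymptotically almost surely means with probability tending to $1$ as $n\to\infty$. *)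

theory Defs
  imports "HOL-Probability.Probability"
begin

definition regular_kgraph :: "nat \<Rightarrow> nat \<Rightarrow> nat \<Rightarrow> nat set set \<Rightarrow> bool" where
  "regular_kgraph n k d H \<longleftrightarrow>
     H \<subseteq> {e. e \<subseteq> {1..n} \<and> card e = k} \<and>
     (\<forall>v\<in>{1..n}. card {e\<in>H. v \<in> e} = d)"

text \<open>The regular k-graph process: a uniformly random d-regular k-graph H on [n],
  followed by a uniformly random ordering of its edges, represented as a list
  of distinct edges (eta_1,...,eta_M) = (es!0,...,es!(M-1)) with set es = H.\<close>
definition regular_kgraph_process :: "nat \<Rightarrow> nat \<Rightarrow> nat \<Rightarrow> nat set list pmf" where
  "regular_kgraph_process n k d =
     do { H \<leftarrow> pmf_of_set {H. regular_kgraph n k d H};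
          pmf_of_set {es. distinct es \<and> set es = H} }"

text \<open>X_t(v) = |{i in (t,M] : v in eta_i}| (eta 1-indexed, list 0-indexed).\<close>
definition Xt :: "nat \<Rightarrow> nat set list \<Rightarrow> nat \<Rightarrow> nat \<Rightarrow> nat" where
  "Xt M es t v = card {i. t \<le> i \<and> i < M \<and> v \<in> es ! i}"

end

theory Submission
  imports Defs "HOL-Probability.Random_Permutations"
begin


definition aa :: "nat \<Rightarrow> nat \<Rightarrow> (nat\<Rightarrow>nat) \<Rightarrow> nat \<Rightarrow> nat" where
  "aa g T u i = g*T*(i div g) + (i mod g + g * u i)"
definition AA :: "nat \<Rightarrow> nat \<Rightarrow> nat \<Rightarrow> (nat\<Rightarrow>nat) \<Rightarrow> nat set" where
  "AA g T k u = aa g T u ` {0..<k}"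
definition UU :: "nat \<Rightarrow> nat \<Rightarrow> (nat \<Rightarrow> nat) set" where
  "UU k T = PiE {0..<k} (\<lambda>i. if i = 0 then {0} else {0..<T})"

lemma UU_lt: "u \<in> UU k T \<Longrightarrow> i < k \<Longrightarrow> 0 < T \<Longrightarrow> u i < T"
proof -
  assume u: "u \<in> UU k T" and i: "i < k" and T: "0 < T"
  have "u i \<in> (if i = 0 then {0} else {0..<T})" using u i unfolding UU_def by (simp add: PiE_iff)
  thus "u i < T" using T by (cases "i = 0") auto
qed

lemma aa_rem_lt: fixes g T i :: nat and u :: "nat\<Rightarrow>nat" shows "0 < g \<Longrightarrow> u i < T \<Longrightarrow> i mod g + g * u i < g * T"
proof -
  assume g: "0 < g" and u: "u i < T"
  have "i mod g < g" using g by (simp add: mod_less_divisor)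
  moreover have "g * (u i + 1) \<le> g * T" using u by (intro mult_le_mono2) simp
  ultimately show ?thesis by (simp add: algebra_simps)
qed

lemma aa_mod: fixes g T i :: nat and u :: "nat\<Rightarrow>nat" shows "0 < g \<Longrightarrow> aa g T u i mod g = i mod g"
  unfolding aa_def by (simp add: mult.assoc)

lemma aa_div: fixes g T i :: nat and u :: "nat\<Rightarrow>nat" shows "0 < g \<Longrightarrow> u i < T \<Longrightarrow> aa g T u i div (g*T) = i div g"
proof -
  assume g: "0 < g" and u: "u i < T"
  have r: "i mod g + g * u i < g * T" using aa_rem_lt[of g u i T] g u by simp
  have gT: "0 < g*T" using g u by simp
  have "(g*T*(i div g) + (i mod g + g * u i)) div (g*T) = i div g + (i mod g + g * u i) div (g*T)"
    using gT by (simp add: mult.commute[of "g*T"])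
  also have "(i mod g + g * u i) div (g*T) = 0" using r by (simp add: div_less)
  finally show ?thesis unfolding aa_def by simp
qed

lemma aa_lt: fixes g T i k w :: nat and u :: "nat\<Rightarrow>nat" shows "0 < g \<Longrightarrow> u i < T \<Longrightarrow> k = g * w \<Longrightarrow> i < k \<Longrightarrow> aa g T u i < k*T"
proof -
  assume g: "0 < g" and u: "u i < T" and k: "k = g*w" and i: "i < k"
  have r: "i mod g + g * u i < g * T" using aa_rem_lt[of g u i T] g u by simp
  have "i div g < w" using i k g by (simp add: div_less_iff_less_mult mult.commute)
  hence "i div g + 1 \<le> w" by simp
  hence "g*T*(i div g + 1) \<le> g*T*w" by (rule mult_left_mono) simp
  hence "g*T*(i div g) + g*T \<le> k*T" using k by (simp add: algebra_simps)
  thus ?thesis unfolding aa_def using r by linarith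
qed

lemma aa_inj: fixes g T k :: nat and u :: "nat\<Rightarrow>nat" shows "0 < g \<Longrightarrow> (\<And>i. i < k \<Longrightarrow> u i < T) \<Longrightarrow> inj_on (aa g T u) {0..<k}"
proof (rule inj_onI)
  fix i j assume g: "0 < g" and u: "\<And>i. i < k \<Longrightarrow> u i < T" and i: "i \<in> {0..<k}" and j: "j \<in> {0..<k}"
    and e: "aa g T u i = aa g T u j"
  have "i mod g = j mod g" using aa_mod[OF g, of T u i] aa_mod[OF g, of T u j] e by simp
  moreover have "i div g = j div g" using aa_div[of g u i T] aa_div[of g u j T] g u e i j by simp
  ultimately show "i = j" by (metis div_mult_mod_eq)
qed

lemma AA_card: fixes g T k :: nat and u :: "nat\<Rightarrow>nat" shows "0 < g \<Longrightarrow> (\<And>i. i < k \<Longrightarrow> u i < T) \<Longrightarrow> card (AA g T k u) = k"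
  unfolding AA_def by (simp add: card_image aa_inj)

lemma AA_inj:
  assumes g: "0 < g" and T: "0 < T" and u: "u \<in> UU k T" and u': "u' \<in> UU k T"
    and e: "AA g T k u = AA g T k u'"
  shows "u = u'"
proof (rule extensionalityI[of _ "{0..<k}"])
  show "u \<in> extensional {0..<k}" "u' \<in> extensional {0..<k}" using u u' unfolding UU_def PiE_def by simp_all
  fix i assume i: "i \<in> {0..<k}"
  have ui: "u i < T" and ui': "\<And>j. j < k \<Longrightarrow> u' j < T" using UU_lt[OF u] UU_lt[OF u'] i T by auto
  have "aa g T u i \<in> AA g T k u'" using e i unfolding AA_def by auto
  then obtain j where j: "j < k" and ej: "aa g T u i = aa g T u' j" unfolding AA_def by auto
  have "i mod g = j mod g" using aa_mod[OF g, of T u i] aa_mod[OF g, of T u' j] ej by simp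
  moreover have "i div g = j div g" using aa_div[of g u i T] aa_div[of g u' j T] g ui ui'[OF j] ej by simp
  ultimately have "i = j" by (metis div_mult_mod_eq)
  with ej have "g * u i = g * u' i" unfolding aa_def by simp
  thus "u i = u' i" using g by simp
qed

lemma AA_zero: "u \<in> UU k T \<Longrightarrow> 0 < k \<Longrightarrow> 0 \<in> AA g T k u"
proof -
  assume u: "u \<in> UU k T" and k: "0 < k"
  have "u 0 \<in> (if (0::nat) = 0 then {0} else {0..<T})" using PiE_mem[of u "{0..<k}" "\<lambda>i. if i = 0 then {0} else {0..<T}" 0] u k unfolding UU_def by simp
  hence "u 0 = 0" by simp
  hence "aa g T u 0 = 0" unfolding aa_def by simp
  thus ?thesis using k unfolding AA_def by (metis atLeastLessThan_iff image_eqI le0)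
qed

lemma card_UU: "0 < k \<Longrightarrow> card (UU k T) = T^(k-1)"
proof -
  assume k: "0 < k"
  have "card (UU k T) = (\<Prod>i\<in>{0..<k}. card (if i = 0 then {0::nat} else {0..<T}))"
    unfolding UU_def by (simp add: card_PiE)
  also have "{0..<k} = insert 0 {1..<k}" using k by auto
  also have "(\<Prod>i\<in>insert 0 {1..<k}. card (if i = 0 then {0::nat} else {0..<T})) = (\<Prod>i\<in>{1..<k}. T)"
    by (simp add: prod.insert)
  finally show ?thesis by simp
qed


lemma mod_add_cancel_nat:
  fixes a b c n :: nat
  assumes "(a + c) mod n = (b + c) mod n" shows "a mod n = b mod n"
proof (cases "a \<le> b")
  case True
  have "n dvd (b + c) - (a + c)" using assms True mod_eq_dvd_iff_nat[of "a+c" "b+c" n] by simp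
  hence "n dvd b - a" by simp
  thus ?thesis using True mod_eq_dvd_iff_nat[of a b n] by simp
next
  case False
  have "n dvd (a + c) - (b + c)" using assms False mod_eq_dvd_iff_nat[of "b+c" "a+c" n] by simp
  hence "n dvd a - b" by simp
  thus ?thesis using False mod_eq_dvd_iff_nat[of b a n] by simp
qed

lemma mod_add_cancel_lt:
  fixes a b c n :: nat
  assumes "(a + c) mod n = (b + c) mod n" "a < n" "b < n" shows "a = b"
  using mod_add_cancel_nat[OF assms(1)] assms(2,3) by simp

definition edg :: "nat \<Rightarrow> nat \<Rightarrow> nat \<Rightarrow> nat \<Rightarrow> (nat\<Rightarrow>nat) \<Rightarrow> nat \<Rightarrow> nat set" where
  "edg n g T k u x = (\<lambda>a. (a + g*x) mod n + 1) ` AA g T k u"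

lemma AA_lt:
  fixes g T k w :: nat
  assumes "0 < g" "0 < T" "k = g*w" "u \<in> UU k T" "a \<in> AA g T k u"
  shows "a < k*T"
proof -
  from assms(5) obtain i where i: "i < k" "a = aa g T u i" unfolding AA_def by auto
  have "u i < T" using UU_lt[OF assms(4) i(1) assms(2)] .
  thus ?thesis using aa_lt[of g u i T k w] assms i by simp
qed

lemma shift_inj: "inj_on (\<lambda>a. (a + g*x) mod n + 1) {0..<(n::nat)}"
proof (rule inj_onI)
  fix a b assume "a \<in> {0..<n}" "b \<in> {0..<n}" "(a + g*x) mod n + 1 = (b + g*x) mod n + 1"
  thus "a = b" using mod_add_cancel_lt[of a "g*x" n b] by simp
qed

lemma edg_card:
  fixes g T k w n :: nat
  assumes "0 < g" "0 < T" "k = g*w" "u \<in> UU k T" "k*T \<le> n"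
  shows "card (edg n g T k u x) = k"
proof -
  have sub: "AA g T k u \<subseteq> {0..<n}" using AA_lt[OF assms(1-4)] assms(5) by fastforce
  have "inj_on (\<lambda>a. (a + g*x) mod n + 1) (AA g T k u)" using inj_on_subset[OF shift_inj sub] .
  moreover have "card (AA g T k u) = k" using AA_card[of g k u T] assms UU_lt by blast
  ultimately show ?thesis unfolding edg_def by (simp add: card_image)
qed

lemma edg_sub:
  fixes g T k n :: nat
  assumes "0 < n"
  shows "edg n g T k u x \<subseteq> {1..n}"
proof
  fix y assume "y \<in> edg n g T k u x"
  then obtain a where "y = (a + g*x) mod n + 1" unfolding edg_def by blast
  moreover have "(a + g*x) mod n < n" using assms by simp
  ultimately show "y \<in> {1..n}" by simp
qed

lemma edg_inj:
  fixes g T k w n :: nat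
  assumes g: "0 < g" and T: "0 < T" and kw: "k = g*w" and k: "0 < k" and gn: "g dvd n"
    and n: "2*(k*T) \<le> n"
    and u: "u \<in> UU k T" and u': "u' \<in> UU k T" and x: "x < n div g" and x': "x' < n div g"
    and e: "edg n g T k u x = edg n g T k u' x'"
  shows "u = u' \<and> x = x'"
proof -
  have lt: "\<And>a. a \<in> AA g T k u \<Longrightarrow> a < k*T" "\<And>a. a \<in> AA g T k u' \<Longrightarrow> a < k*T"
    using AA_lt[OF g T kw u] AA_lt[OF g T kw u'] by auto
  have gx: "g*x < n" "g*x' < n" using x x' g gn
    by (metis dvd_mult_div_cancel mult_less_cancel1)+
  have "(0 + g*x) mod n + 1 \<in> edg n g T k u x" unfolding edg_def using AA_zero[OF u k] by blast
  hence "(g*x) mod n + 1 \<in> edg n g T k u' x'" using e by simp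
  then obtain b where b: "b \<in> AA g T k u'" "(b + g*x') mod n = (g*x) mod n" unfolding edg_def by auto
  have "(0 + g*x') mod n + 1 \<in> edg n g T k u' x'" unfolding edg_def using AA_zero[OF u' k] by blast
  hence "(g*x') mod n + 1 \<in> edg n g T k u x" using e by simp
  then obtain a where a: "a \<in> AA g T k u" "(a + g*x) mod n = (g*x') mod n" unfolding edg_def by auto
  have "(a + b + g*x') mod n = (a + (b + g*x') mod n) mod n" by (simp add: mod_add_right_eq add.assoc)
  also have "\<dots> = (a + g*x) mod n" using b(2) by (simp add: mod_add_right_eq)
  also have "\<dots> = (0 + g*x') mod n" using a(2) by simp
  finally have "(a + b) mod n = 0 mod n" by (rule mod_add_cancel_nat)
  moreover have "a + b < n" using lt(1)[OF a(1)] lt(2)[OF b(1)] n by linarith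
  ultimately have "a + b = 0" by simp
  hence "a = 0" by simp
  with a(2) have "g*x = g*x'" using gx by simp
  hence xx: "x = x'" using g by simp
  have sub: "AA g T k u \<subseteq> {0..<n}" "AA g T k u' \<subseteq> {0..<n}" using lt n by fastforce+
  have "AA g T k u = AA g T k u'"
    using e xx inj_on_image_eq_iff[OF shift_inj[of g x n] sub(1) sub(2)] unfolding edg_def by simp
  hence "u = u'" using AA_inj[OF g T u u'] by simp
  with xx show ?thesis by simp
qed


lemma cnt_res:
  fixes g k w r :: nat
  assumes g: "0 < g" and kw: "k = g*w" and r: "r < g"
  shows "card {i \<in> {0..<k}. i mod g = r} = w"
proof -
  have "{i \<in> {0..<k}. i mod g = r} = (\<lambda>j. g*j + r) ` {0..<w}"
  proof (intro set_eqI iffI)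
    fix i assume i: "i \<in> {i \<in> {0..<k}. i mod g = r}"
    hence "i = g*(i div g) + r" using div_mult_mod_eq[of i g] by (simp add: mult.commute)
    moreover have "i div g < w" using i kw g by (simp add: div_less_iff_less_mult mult.commute)
    ultimately show "i \<in> (\<lambda>j. g*j + r) ` {0..<w}" by force
  next
    fix i assume "i \<in> (\<lambda>j. g*j + r) ` {0..<w}"
    then obtain j where j: "j < w" "i = g*j + r" by auto
    have "g*(j+1) \<le> g*w" using j(1) by (intro mult_le_mono2) simp
    hence "i < k" using j r kw by simp
    moreover have "i mod g = r" using j r by simp
    ultimately show "i \<in> {i \<in> {0..<k}. i mod g = r}" by simp
  qed
  moreover have "inj_on (\<lambda>j. g*j + r) {0..<w}" using g by (intro inj_onI) simp
  ultimately show ?thesis by (simp add: card_image)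
qed

lemma cnt_AA:
  fixes g T k w r :: nat
  assumes g: "0 < g" and T: "0 < T" and kw: "k = g*w" and r: "r < g" and u: "u \<in> UU k T"
  shows "card {a \<in> AA g T k u. a mod g = r} = w"
proof -
  have ul: "\<And>i. i < k \<Longrightarrow> u i < T" using UU_lt[OF u _ T] by simp
  have md: "\<And>i. aa g T u i mod g = i mod g" using aa_mod[OF g] by simp
  have "{a \<in> AA g T k u. a mod g = r} = aa g T u ` {i \<in> {0..<k}. i mod g = r}"
  proof (intro set_eqI iffI)
    fix a assume "a \<in> {a \<in> AA g T k u. a mod g = r}"
    hence a1: "a \<in> aa g T u ` {0..<k}" and a2: "a mod g = r" unfolding AA_def by simp_all
    from a1 obtain i where i: "i \<in> {0..<k}" "a = aa g T u i" by (rule imageE)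
    have "i mod g = r" using a2 i(2) md[of i] by simp
    thus "a \<in> aa g T u ` {i \<in> {0..<k}. i mod g = r}" using i by (intro image_eqI[of a _ i]) simp_all
  next
    fix a assume "a \<in> aa g T u ` {i \<in> {0..<k}. i mod g = r}"
    then obtain i where i: "i \<in> {i \<in> {0..<k}. i mod g = r}" "a = aa g T u i" by (rule imageE)
    have "a \<in> AA g T k u" unfolding AA_def using i by simp
    moreover have "a mod g = r" using i md[of i] by simp
    ultimately show "a \<in> {a \<in> AA g T k u. a mod g = r}" by simp
  qed
  moreover have "inj_on (aa g T u) {0..<k}" using aa_inj[of g k u T] g ul by simp
  hence "inj_on (aa g T u) {i \<in> {0..<k}. i mod g = r}" by (rule inj_on_subset) blast
  ultimately show ?thesis using cnt_res[OF g kw r] by (simp add: card_image)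
qed

lemma K1:
  fixes g n a y :: nat
  assumes g: "0 < g" and gn: "g dvd n" and a: "a < n" and y: "y < n" and ay: "a mod g = y mod g"
  shows "(a + g * (((y + n - a) mod n) div g)) mod n = y" and "((y + n - a) mod n) div g < n div g"
proof -
  obtain q where q: "n = g*q" using gn by blast
  have "(y + n) mod g = a mod g" using ay q by simp
  hence "g dvd (y + n) - a" using mod_eq_dvd_iff_nat[of a "y+n" g] a by simp
  hence d: "g dvd ((y + n - a) mod n)" using gn by (simp add: dvd_mod)
  hence e: "g * (((y + n - a) mod n) div g) = (y + n - a) mod n" by simp
  have "(a + (y + n - a) mod n) mod n = (a + (y + n - a)) mod n" by (simp add: mod_add_right_eq)
  also have "a + (y + n - a) = y + n" using a by simp
  also have "(y + n) mod n = y" using y by simp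
  finally show "(a + g * (((y + n - a) mod n) div g)) mod n = y" using e by simp
  have "(y + n - a) mod n < n" using a by simp
  then show "((y + n - a) mod n) div g < n div g" using d gn g
    by (metis dvd_div_mult_self div_less_iff_less_mult dvd_div_mult mult.commute nat_mult_less_cancel_disj)
qed

lemma K2:
  fixes g n a x y :: nat
  assumes gn: "g dvd n" and e: "(a + g*x) mod n = y"
  shows "a mod g = y mod g"
proof -
  have "y mod g = (a + g*x) mod g" using e mod_mod_cancel[OF gn, of "a + g*x"] by simp
  thus ?thesis by simp
qed

lemma K3:
  fixes g n a x x' y :: nat
  assumes g: "0 < g" and e: "(a + g*x) mod n = y" "(a + g*x') mod n = y" and l: "g*x < n" "g*x' < n"
  shows "x = x'"
proof -
  have "(g*x + a) mod n = (g*x' + a) mod n" using e by (simp add: add.commute)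
  hence "g*x = g*x'" using mod_add_cancel_lt[of "g*x" a n "g*x'"] l by simp
  thus ?thesis using g by simp
qed

lemma cnt_x:
  fixes g T k w n y :: nat
  assumes g: "0 < g" and T: "0 < T" and kw: "k = g*w" and gn: "g dvd n" and u: "u \<in> UU k T"
    and n: "k*T \<le> n" and y: "y < n"
  shows "card {x \<in> {0..<n div g}. y+1 \<in> edg n g T k u x} = w"
proof -
  define A' where "A' = {a \<in> AA g T k u. a mod g = y mod g}"
  define xf where "xf a = ((y + n - a) mod n) div g" for a
  define Xs where "Xs = {x \<in> {0..<n div g}. y+1 \<in> edg n g T k u x}"
  have lt: "\<And>a. a \<in> AA g T k u \<Longrightarrow> a < n" using AA_lt[OF g T kw u] n by (meson less_le_trans)
  have mem: "y+1 \<in> edg n g T k u x \<longleftrightarrow> (\<exists>a\<in>AA g T k u. (a + g*x) mod n = y)" for x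
    unfolding edg_def image_iff by auto
  have gx: "\<And>x. x < n div g \<Longrightarrow> g*x < n" using g gn
    by (metis dvd_mult_div_cancel mult_less_cancel1)
  have xfA: "(a + g * xf a) mod n = y" "xf a < n div g" if "a \<in> A'" for a
  proof -
    have "a \<in> AA g T k u" "a mod g = y mod g" using that unfolding A'_def by simp_all
    thus "(a + g * xf a) mod n = y" "xf a < n div g" using K1[OF g gn _ y] lt unfolding xf_def by simp_all
  qed
  have AA': "a \<in> AA g T k u" if "a \<in> A'" for a using that unfolding A'_def by simp
  have "bij_betw xf A' Xs"
  proof (rule bij_betwI')
    fix a a' assume a: "a \<in> A'" and a': "a' \<in> A'"
    show "(xf a = xf a') = (a = a')"
    proof
      assume e: "xf a = xf a'"
      have "(a + g * xf a) mod n = (a' + g * xf a) mod n" using xfA(1)[OF a] xfA(1)[OF a'] e by simp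
      thus "a = a'" using mod_add_cancel_lt[of a "g * xf a" n a'] lt[OF AA'[OF a]] lt[OF AA'[OF a']] by simp
    qed simp
  next
    fix a assume a: "a \<in> A'"
    have "y+1 \<in> edg n g T k u (xf a)" using mem[of "xf a"] xfA(1)[OF a] AA'[OF a] by blast
    then show "xf a \<in> Xs" using xfA(2)[OF a] unfolding Xs_def by simp
  next
    fix x assume "x \<in> Xs"
    hence x: "x < n div g" and "y+1 \<in> edg n g T k u x" unfolding Xs_def by simp_all
    then obtain a where a: "a \<in> AA g T k u" "(a + g*x) mod n = y" using mem by blast
    have aA: "a \<in> A'" using K2[OF gn a(2)] a(1) unfolding A'_def by simp
    have "x = xf a" using K3[OF g a(2) xfA(1)[OF aA] gx[OF x] gx[OF xfA(2)[OF aA]]] .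
    thus "\<exists>a\<in>A'. x = xf a" using aA by blast
  qed
  hence "card Xs = card A'" by (simp add: bij_betw_same_card)
  also have "card A' = w" unfolding A'_def using cnt_AA[OF g T kw _ u] g by simp
  finally show ?thesis unfolding Xs_def .
qed


lemma exists_regular:
  fixes n k d :: nat
  assumes k2: "2 \<le> k" and n: "2*k \<le> n" and dvd: "k dvd n*d" and dle: "d \<le> (n div (2*k))^(k-1)"
  shows "\<exists>H. regular_kgraph n k d H"
proof -
  define g where "g = gcd n k"
  define w where "w = k div g"
  define T where "T = n div (2*k)"
  define m where "m = d div w"
  have g: "0 < g" unfolding g_def using k2 by simp
  have gk: "g dvd k" and gn: "g dvd n" unfolding g_def by simp_all
  have kw: "k = g*w" unfolding w_def using gk by simp
  have T: "0 < T" unfolding T_def using n k2 by (simp add: div_greater_zero_iff)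
  have nT: "2*k*T \<le> n" unfolding T_def by (rule times_div_less_eq_dividend)
  hence nT': "2*(k*T) \<le> n" "k*T \<le> n" by simp_all
  have cop: "coprime w (n div g)" unfolding w_def g_def using div_gcd_coprime[of k n] k2
    by (simp add: gcd.commute)
  have e: "g*((n div g)*d) = n*d" using gn by (metis dvd_mult_div_cancel mult.assoc)
  have "g*w dvd g*((n div g)*d)" using dvd kw by (simp only: e)
  hence "w dvd (n div g)*d" using g by simp
  hence wd: "w dvd d" using cop by (simp add: coprime_dvd_mult_right_iff)
  have dm: "d = m*w" unfolding m_def using wd by simp
  have "m \<le> d" unfolding m_def by simp
  also have "d \<le> card (UU k T)" using dle card_UU[of k T] k2 unfolding T_def by simp
  finally obtain U where U: "U \<subseteq> UU k T" "card U = m" "finite U" by (rule obtain_subset_with_card_n)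
  define X where "X = {0..<n div g}"
  define E where "E = (\<lambda>p. edg n g T k (fst p) (snd p))"
  define H where "H = E ` (U \<times> X)"
  have k0: "0 < k" using k2 by simp
  have injE: "inj_on E (U \<times> X)"
  proof (rule inj_onI)
    fix p q assume p: "p \<in> U \<times> X" and q: "q \<in> U \<times> X" and e: "E p = E q"
    have "fst p = fst q \<and> snd p = snd q"
      using edg_inj[OF g T kw k0 gn nT'(1), of "fst p" "fst q" "snd p" "snd q"] p q e U(1)
      unfolding E_def X_def by (auto simp: subset_iff)
    thus "p = q" by (simp add: prod_eq_iff)
  qed
  have "regular_kgraph n k d H"
    unfolding regular_kgraph_def
  proof (intro conjI ballI subsetI)
    fix e assume "e \<in> H"
    then obtain p where p: "p \<in> U \<times> X" "e = E p" unfolding H_def by blast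
    have "fst p \<in> UU k T" using p U(1) by auto
    hence "card e = k" "e \<subseteq> {1..n}" using edg_card[OF g T kw _ nT'(2)] edg_sub[of n] n k2 p(2)
      unfolding E_def by simp_all
    thus "e \<in> {e. e \<subseteq> {1..n} \<and> card e = k}" by simp
  next
    fix v assume v: "v \<in> {1..n}"
    define y where "y = v - 1"
    have y: "y < n" "v = y + 1" using v unfolding y_def by auto
    have "{e \<in> H. v \<in> e} = E ` {p \<in> U \<times> X. v \<in> E p}" unfolding H_def by auto
    hence "card {e \<in> H. v \<in> e} = card {p \<in> U \<times> X. v \<in> E p}"
      using inj_on_subset[OF injE, of "{p \<in> U \<times> X. v \<in> E p}"] by (simp add: card_image)
    also have "{p \<in> U \<times> X. v \<in> E p} = Sigma U (\<lambda>u. {x \<in> X. y+1 \<in> edg n g T k u x})"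
      unfolding E_def using y by auto
    also have "card \<dots> = (\<Sum>u\<in>U. card {x \<in> X. y+1 \<in> edg n g T k u x})"
      using U(3) unfolding X_def by (simp add: card_SigmaI)
    also have "\<dots> = (\<Sum>u\<in>U. w)"
    proof (rule sum.cong[OF refl])
      fix u assume "u \<in> U"
      hence "u \<in> UU k T" using U(1) by auto
      thus "card {x \<in> X. y+1 \<in> edg n g T k u x} = w" unfolding X_def
        using cnt_x[OF g T kw gn _ nT'(2) y(1)] by simp
    qed
    also have "\<dots> = d" using U(2) dm by simp
    finally show "card {e \<in> H. v \<in> e} = d" .
  qed
  thus ?thesis by blast
qed


lemma card_filter_sum: "finite A \<Longrightarrow> card {x \<in> A. P x} = (\<Sum>x\<in>A. if P x then 1 else (0::nat))"
  by (simp add: sum.If_cases Int_def)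

lemma regular_card:
  assumes "regular_kgraph n k d H"
  shows "finite H" "k * card H = n * d"
proof -
  have Hs: "H \<subseteq> {e. e \<subseteq> {1..n} \<and> card e = k}" and deg: "\<And>v. v \<in> {1..n} \<Longrightarrow> card {e\<in>H. v \<in> e} = d"
    using assms unfolding regular_kgraph_def by auto
  have "H \<subseteq> Pow {1..n}" using Hs by auto
  thus fH: "finite H" by (rule finite_subset) simp
  have "n * d = (\<Sum>v\<in>{1..n}. card {e\<in>H. v \<in> e})" using deg by simp
  also have "\<dots> = (\<Sum>v\<in>{1..n}. \<Sum>e\<in>H. if v \<in> e then 1 else 0)"
    using fH by (simp add: card_filter_sum)
  also have "\<dots> = (\<Sum>e\<in>H. \<Sum>v\<in>{1..n}. if v \<in> e then 1 else 0)" by (rule sum.swap)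
  also have "\<dots> = (\<Sum>e\<in>H. k)"
  proof (rule sum.cong[OF refl])
    fix e assume e: "e \<in> H"
    have "(\<Sum>v\<in>{1..n}. if v \<in> e then 1 else (0::nat)) = card {v \<in> {1..n}. v \<in> e}"
      by (rule card_filter_sum[symmetric]) simp
    also have "{v \<in> {1..n}. v \<in> e} = e"
    proof -
      have "e \<subseteq> {1..n}" using Hs e by blast
      thus ?thesis by blast
    qed
    finally show "(\<Sum>v\<in>{1..n}. if v \<in> e then 1 else (0::nat)) = k" using Hs e by auto
  qed
  finally show "k * card H = n * d" by simp
qed

lemma pow_sum_subsets:
  fixes c :: real
  assumes "finite B"
  shows "(1 + c) ^ card B = (\<Sum>J\<in>Pow B. c ^ card J)"
  using assms
proof (induction B rule: finite_induct)
  case empty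
  then show ?case by simp
next
  case (insert x B)
  have fin: "finite (Pow B)" using insert by simp
  have disj: "Pow B \<inter> insert x ` Pow B = {}" using insert by auto
  have inj: "inj_on (insert x) (Pow B)" using insert by (intro inj_onI) (auto simp: subset_iff)
  have "(\<Sum>J\<in>Pow (insert x B). c ^ card J) = (\<Sum>J\<in>Pow B. c ^ card J) + (\<Sum>J\<in>insert x ` Pow B. c ^ card J)"
    unfolding Pow_insert using fin disj by (simp add: sum.union_disjoint)
  also have "(\<Sum>J\<in>insert x ` Pow B. c ^ card J) = (\<Sum>J\<in>Pow B. c ^ card (insert x J))"
    using inj by (simp add: sum.reindex)
  also have "\<dots> = (\<Sum>J\<in>Pow B. c * c ^ card J)"
  proof (rule sum.cong[OF refl])
    fix J assume "J \<in> Pow B"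
    hence "x \<notin> J" "finite J" using insert by (auto intro: finite_subset)
    thus "c ^ card (insert x J) = c * c ^ card J" by simp
  qed
  also have "\<dots> = c * (\<Sum>J\<in>Pow B. c ^ card J)" by (simp add: sum_distrib_left)
  finally show ?case using insert by (simp add: algebra_simps)
qed

lemma mgf_gen:
  fixes c r K :: real and S :: "'a \<Rightarrow> 'b set"
  assumes fP: "finite P" and fD: "finite D" and c: "0 \<le> c" and r: "0 \<le> r"
    and bnd: "\<And>J. J \<subseteq> D \<Longrightarrow> real (card {x \<in> P. J \<subseteq> S x}) \<le> K * r ^ card J"
  shows "(\<Sum>x\<in>P. (1 + c) ^ card (D \<inter> S x)) \<le> K * (1 + c * r) ^ card D"
proof -
  have "(\<Sum>x\<in>P. (1 + c) ^ card (D \<inter> S x)) = (\<Sum>x\<in>P. \<Sum>J\<in>Pow (D \<inter> S x). c ^ card J)"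
    using fD by (simp add: pow_sum_subsets)
  also have "\<dots> = (\<Sum>x\<in>P. \<Sum>J\<in>Pow D. if J \<subseteq> S x then c ^ card J else 0)"
  proof (rule sum.cong[OF refl])
    fix x
    have eq: "Pow (D \<inter> S x) = {J \<in> Pow D. J \<subseteq> S x}" by auto
    have fPow: "finite (Pow D)" using fD by simp
    show "(\<Sum>J\<in>Pow (D \<inter> S x). c ^ card J) = (\<Sum>J\<in>Pow D. if J \<subseteq> S x then c ^ card J else 0)"
      by (simp only: eq sum.inter_filter[OF fPow])
  qed
  also have "\<dots> = (\<Sum>J\<in>Pow D. \<Sum>x\<in>P. if J \<subseteq> S x then c ^ card J else 0)" by (rule sum.swap)
  also have "\<dots> = (\<Sum>J\<in>Pow D. c ^ card J * real (card {x \<in> P. J \<subseteq> S x}))"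
  proof (rule sum.cong[OF refl])
    fix J
    have "(\<Sum>x\<in>P. if J \<subseteq> S x then c ^ card J else 0) = (\<Sum>x\<in>{x \<in> P. J \<subseteq> S x}. c ^ card J)"
      using fP by (simp only: sum.inter_filter)
    thus "(\<Sum>x\<in>P. if J \<subseteq> S x then c ^ card J else 0) = c ^ card J * real (card {x \<in> P. J \<subseteq> S x})"
      by simp
  qed
  also have "\<dots> \<le> (\<Sum>J\<in>Pow D. c ^ card J * (K * r ^ card J))"
    by (rule sum_mono, rule mult_left_mono) (use bnd c in auto)
  also have "\<dots> = K * (\<Sum>J\<in>Pow D. (c * r) ^ card J)"
    by (simp add: sum_distrib_left power_mult_distrib algebra_simps)
  also have "\<dots> = K * (1 + c * r) ^ card D" using fD by (simp add: pow_sum_subsets)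
  finally show ?thesis .
qed

lemma markov_sum:
  fixes f :: "'a \<Rightarrow> real"
  assumes "finite P" "\<And>x. x \<in> P \<Longrightarrow> 0 \<le> f x"
  shows "real (card {x \<in> P. a \<le> f x}) * a \<le> (\<Sum>x\<in>P. f x)"
proof -
  have "real (card {x \<in> P. a \<le> f x}) * a = (\<Sum>x\<in>{x \<in> P. a \<le> f x}. a)" by simp
  also have "\<dots> \<le> (\<Sum>x\<in>{x \<in> P. a \<le> f x}. f x)" by (rule sum_mono) simp
  also have "\<dots> \<le> (\<Sum>x\<in>P. f x)" using assms by (intro sum_mono2) auto
  finally show ?thesis .
qed


lemma perm_split:
  assumes fA: "finite A" and ne: "A \<noteq> {}"
  shows "card {es \<in> permutations_of_set A. P es} = (\<Sum>x\<in>A. card {xs \<in> permutations_of_set (A - {x}). P (x # xs)})"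
proof -
  have "{es \<in> permutations_of_set A. P es} = (\<Union>x\<in>A. (\<lambda>xs. x # xs) ` {xs \<in> permutations_of_set (A - {x}). P (x # xs)})"
    using permutations_of_set_nonempty[OF ne] by auto
  also have "card \<dots> = (\<Sum>x\<in>A. card ((\<lambda>xs. x # xs) ` {xs \<in> permutations_of_set (A - {x}). P (x # xs)}))"
    using fA by (intro card_UN_disjoint) auto
  also have "\<dots> = (\<Sum>x\<in>A. card {xs \<in> permutations_of_set (A - {x}). P (x # xs)})"
    by (intro sum.cong refl card_image) (simp add: inj_on_def)
  finally show ?thesis .
qed

lemma ratio_ineq:
  fixes N j :: nat and s :: real
  assumes N: "2 \<le> N" and j: "j \<le> N" and s: "0 \<le> s"
  shows "(real N - real j) * (s / (real N - 1)) ^ j \<le> real N * (s / real N) ^ j"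
proof -
  have Npos: "0 < real N" "0 < real N - 1" using N by auto
  have "1 + real j * (- 1 / real N) \<le> (1 + (- 1 / real N)) ^ j"
    by (rule Bernoulli_inequality) (use N in \<open>simp add: field_simps\<close>)
  hence b: "(real N - real j) / real N \<le> ((real N - 1) / real N) ^ j"
    using Npos by (simp add: field_simps)
  have "(real N - real j) * (s / (real N - 1)) ^ j = real N * (((real N - real j) / real N) * (s / (real N - 1)) ^ j)"
    using Npos by (simp add: field_simps)
  also have "\<dots> \<le> real N * (((real N - 1) / real N) ^ j * (s / (real N - 1)) ^ j)"
    by (intro mult_left_mono mult_right_mono b) (use s Npos in auto)
  also have "((real N - 1) / real N) ^ j * (s / (real N - 1)) ^ j = (s / real N) ^ j"
    using Npos by (simp add: power_mult_distrib[symmetric])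
  finally show ?thesis .
qed

lemma drop_bound:
  "finite A \<Longrightarrow> J \<subseteq> A \<Longrightarrow> t \<le> card A \<Longrightarrow>
   real (card {es \<in> permutations_of_set A. J \<subseteq> set (drop t es)})
     \<le> fact (card A) * ((real (card A) - real t) / real (card A)) ^ card J"
proof (induction t arbitrary: A J)
  case 0
  have "card {es \<in> permutations_of_set A. J \<subseteq> set (drop 0 es)} \<le> card (permutations_of_set A)"
    by (intro card_mono) auto
  hence "card {es \<in> permutations_of_set A. J \<subseteq> set (drop 0 es)} \<le> fact (card A)"
    using 0 by simp
  hence "real (card {es \<in> permutations_of_set A. J \<subseteq> set (drop 0 es)}) \<le> real (fact (card A))"
    by (simp only: of_nat_le_iff)
  hence le: "real (card {es \<in> permutations_of_set A. J \<subseteq> set (drop 0 es)}) \<le> fact (card A)"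
    by (simp only: of_nat_fact)
  show ?case
  proof (cases "card A = 0")
    case True
    hence "A = {}" using 0 by simp
    hence "J = {}" using 0 by simp
    thus ?thesis using le by simp
  next
    case False
    thus ?thesis using le by simp
  qed
next
  case (Suc t)
  define N where "N = card A"
  have N1: "1 \<le> N" using Suc unfolding N_def by simp
  have ne: "A \<noteq> {}" using N1 Suc unfolding N_def by auto
  have fJ: "finite J" using Suc by (meson finite_subset)
  have "card {es \<in> permutations_of_set A. J \<subseteq> set (drop (Suc t) es)}
      = (\<Sum>x\<in>A. card {xs \<in> permutations_of_set (A - {x}). J \<subseteq> set (drop t xs)})"
    using perm_split[OF Suc.prems(1) ne] by simp
  hence "real (card {es \<in> permutations_of_set A. J \<subseteq> set (drop (Suc t) es)})
      = (\<Sum>x\<in>A. real (card {xs \<in> permutations_of_set (A - {x}). J \<subseteq> set (drop t xs)}))"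
    by simp
  also have "\<dots> \<le> (\<Sum>x\<in>A. if x \<in> J then 0 else fact (N - 1) * ((real (N - 1) - real t) / real (N - 1)) ^ card J)"
  proof (rule sum_mono)
    fix x assume x: "x \<in> A"
    show "real (card {xs \<in> permutations_of_set (A - {x}). J \<subseteq> set (drop t xs)})
      \<le> (if x \<in> J then 0 else fact (N - 1) * ((real (N - 1) - real t) / real (N - 1)) ^ card J)"
    proof (cases "x \<in> J")
      case True
      have "{xs \<in> permutations_of_set (A - {x}). J \<subseteq> set (drop t xs)} = {}"
      proof (intro equalityI subsetI)
        fix xs assume xs: "xs \<in> {xs \<in> permutations_of_set (A - {x}). J \<subseteq> set (drop t xs)}"
        hence "set xs = A - {x}" "J \<subseteq> set (drop t xs)" by (auto dest: permutations_of_setD)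
        moreover have "set (drop t xs) \<subseteq> set xs" by (rule set_drop_subset)
        ultimately show "xs \<in> {}" using True by blast
      qed simp
      thus ?thesis using True by simp
    next
      case False
      have cA: "card (A - {x}) = N - 1" using x Suc.prems unfolding N_def by simp
      have "real (card {xs \<in> permutations_of_set (A - {x}). J \<subseteq> set (drop t xs)})
          \<le> fact (card (A - {x})) * ((real (card (A - {x})) - real t) / real (card (A - {x}))) ^ card J"
      proof (rule Suc.IH)
        show "finite (A - {x})" using Suc.prems by simp
        show "J \<subseteq> A - {x}" using Suc.prems False by blast
        show "t \<le> card (A - {x})" using Suc.prems cA unfolding N_def by simp
      qed
      thus ?thesis using False cA by simp
    qed
  qed
  also have "\<dots> = (\<Sum>x\<in>A - J. fact (N - 1) * ((real (N - 1) - real t) / real (N - 1)) ^ card J)"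
    using Suc.prems by (simp add: sum.If_cases Diff_eq Int_absorb1)
  also have "\<dots> = (real N - real (card J)) * (fact (N - 1) * ((real (N - 1) - real t) / real (N - 1)) ^ card J)"
    using Suc.prems fJ unfolding N_def by (simp add: card_Diff_subset of_nat_diff card_mono)
  also have "\<dots> \<le> fact N * ((real N - real (Suc t)) / real N) ^ card J"
  proof (cases "N = 1")
    case True
    hence "t = 0" using Suc.prems unfolding N_def by simp
    have "card J \<le> 1" using card_mono[OF Suc.prems(1,2)] True unfolding N_def by simp
    then consider "card J = 0" | "card J = 1" by linarith
    thus ?thesis using True \<open>t = 0\<close> by cases auto
  next
    case False
    hence N2: "2 \<le> N" using N1 by simp
    have jN: "card J \<le> N" using card_mono[OF Suc.prems(1,2)] unfolding N_def by simp
    have s: "0 \<le> real N - 1 - real t" using Suc.prems unfolding N_def by simp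
    have fN: "fact N = real N * fact (N - 1)" using N1 fact_reduce[of N, where 'a=real] by simp
    have r1: "real (N - 1) = real N - 1" using N1 by simp
    have "(real N - real (card J)) * ((real N - 1 - real t) / (real N - 1)) ^ card J
        \<le> real N * ((real N - 1 - real t) / real N) ^ card J"
      by (rule ratio_ineq[OF N2 jN s])
    hence "fact (N - 1) * ((real N - real (card J)) * ((real N - 1 - real t) / (real N - 1)) ^ card J)
        \<le> fact (N - 1) * (real N * ((real N - 1 - real t) / real N) ^ card J)"
      by (rule mult_left_mono) simp
    thus ?thesis using fN r1 by (simp add: algebra_simps)
  qed
  finally show ?case unfolding N_def .
qed

lemma take_bound:
  assumes "finite A" "J \<subseteq> A" "t \<le> card A"
  shows "real (card {es \<in> permutations_of_set A. J \<subseteq> set (take t es)})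
     \<le> fact (card A) * (real t / real (card A)) ^ card J"
proof -
  have "{es \<in> permutations_of_set A. J \<subseteq> set (take t es)}
      = rev ` {es \<in> permutations_of_set A. J \<subseteq> set (drop (card A - t) es)}"
  proof (intro equalityI subsetI)
    fix es assume es: "es \<in> {es \<in> permutations_of_set A. J \<subseteq> set (take t es)}"
    have len: "length es = card A" using es by (auto intro: length_finite_permutations_of_set)
    have "rev es \<in> permutations_of_set A" using es by (auto simp: permutations_of_set_def)
    moreover have "set (drop (card A - t) (rev es)) = set (take t es)"
      using len assms(3) by (simp add: drop_rev)
    ultimately show "es \<in> rev ` {es \<in> permutations_of_set A. J \<subseteq> set (drop (card A - t) es)}"
      using es by (intro image_eqI[of es rev "rev es"]) auto
  next
    fix es assume "es \<in> rev ` {es \<in> permutations_of_set A. J \<subseteq> set (drop (card A - t) es)}"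
    then obtain fs where fs: "es = rev fs" "fs \<in> permutations_of_set A" "J \<subseteq> set (drop (card A - t) fs)" by auto
    have len: "length fs = card A" using fs by (auto intro: length_finite_permutations_of_set)
    have "set (drop (card A - t) fs) = set (take t es)" using fs(1) len assms(3)
      by (simp add: drop_rev[of _ "rev fs", simplified] )
    thus "es \<in> {es \<in> permutations_of_set A. J \<subseteq> set (take t es)}" using fs
      by (auto simp: permutations_of_set_def)
  qed
  hence "card {es \<in> permutations_of_set A. J \<subseteq> set (take t es)}
      = card {es \<in> permutations_of_set A. J \<subseteq> set (drop (card A - t) es)}"
    by (simp add: card_image)
  hence "real (card {es \<in> permutations_of_set A. J \<subseteq> set (take t es)})
     \<le> fact (card A) * ((real (card A) - real (card A - t)) / real (card A)) ^ card J"
    using drop_bound[OF assms(1,2), of "card A - t"] by simp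
  thus ?thesis using assms(3) by (simp add: of_nat_diff)
qed


lemma R1: fixes x :: real assumes "0 \<le> x" "x \<le> 1" shows "exp x - 1 \<le> x + x * x"
  using exp_bound[OF assms] by (simp add: power2_eq_square)

lemma R2: fixes x :: real assumes x: "0 \<le> x" shows "exp (- x) \<le> 1 - x + x * x"
proof -
  define L where "L = 1 + x + x\<^sup>2 / 2"
  have L: "L \<le> exp x" unfolding L_def by (rule exp_lower_Taylor_quadratic[OF x])
  have Lp: "0 < L" unfolding L_def using x by (simp add: add_pos_nonneg)
  have id: "(1 - x + x * x) * L = 1 + (x*x)/2 + (x*x*x)/2 + (x*x*x*x)/2"
    unfolding L_def power2_eq_square by (simp add: field_simps)
  have "0 \<le> (x*x)/2 + (x*x*x)/2 + (x*x*x*x)/2" using x by simp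
  hence ge: "1 \<le> (1 - x + x * x) * L" using id by linarith
  have "exp (- x) = 1 / exp x" by (simp add: exp_minus field_simps)
  also have "\<dots> \<le> 1 / L" using L Lp by (intro divide_left_mono) auto
  also have "\<dots> \<le> 1 - x + x * x" using ge Lp by (simp add: field_simps)
  finally show ?thesis .
qed

lemma pow_exp_le: fixes y :: real assumes "0 \<le> 1 + y" shows "(1 + y) ^ d \<le> exp (real d * y)"
proof -
  have "(1 + y) ^ d \<le> exp y ^ d" by (rule power_mono) (use assms exp_ge_add_one_self in auto)
  thus ?thesis by (simp add: exp_of_nat_mult)
qed

lemma split_card:
  assumes es: "es \<in> permutations_of_set A" and D: "D \<subseteq> A" and fA: "finite A"
  shows "card (D \<inter> set (drop t es)) + card (D \<inter> set (take t es)) = card D"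
proof -
  have dist: "distinct es" and se: "set es = A" using es by (auto dest: permutations_of_setD)
  have "set (take t es) \<inter> set (drop t es) = {}" using dist by (simp add: set_take_disj_set_drop_if_distinct)
  moreover have "set (take t es) \<union> set (drop t es) = A" using se
    by (metis append_take_drop_id set_append)
  ultimately have "D = (D \<inter> set (drop t es)) \<union> (D \<inter> set (take t es))"
    "(D \<inter> set (drop t es)) \<inter> (D \<inter> set (take t es)) = {}" using D by blast+
  moreover have "finite D" using D fA by (meson finite_subset)
  ultimately show ?thesis by (metis card_Un_disjoint finite_Int)
qed

locale tailsetup =
  fixes A :: "'a set" and D :: "'a set" and t :: nat and lam :: real
  assumes fA: "finite A" and DA: "D \<subseteq> A" and Apos: "0 < card A" and tA: "t \<le> card A"
    and lam: "0 < lam" "lam \<le> 2 * (real (card D) * ((real (card A) - real t) / real (card A)))"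
begin

definition "N = card A"
definition "p = (real N - real t) / real N"
definition "mu = real (card D) * p"
definition "th = lam / (2 * mu)"
definition "P = permutations_of_set A"

lemma basics: "0 < real N" "0 \<le> p" "p \<le> 1" "0 < mu" "0 < th" "th \<le> 1" "finite P" "finite D"
proof -
  show N: "0 < real N" using Apos unfolding N_def by simp
  show "0 \<le> p" "p \<le> 1" unfolding p_def using N tA unfolding N_def by (auto simp: field_simps)
  show mu: "0 < mu" using lam unfolding mu_def p_def N_def by linarith
  show "0 < th" unfolding th_def using mu lam by simp
  have "lam \<le> 2 * mu" using lam unfolding mu_def p_def N_def by simp
  thus "th \<le> 1" unfolding th_def using mu by (simp add: pos_divide_le_eq)
  show "finite P" unfolding P_def by simp
  show "finite D" using DA fA by (meson finite_subset)
qed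

lemma upper: "real (card {es \<in> P. mu + lam \<le> real (card (D \<inter> set (drop t es)))}) \<le> fact N * exp (- lam\<^sup>2 / (4 * mu))"
proof -
  note b = basics
  define c where "c = exp th - 1"
  have c0: "0 \<le> c" unfolding c_def using b by simp
  have fexp: "(1 + c) ^ m = exp (th * real m)" for m by (simp add: c_def exp_of_nat2_mult)
  have mgf: "(\<Sum>es\<in>P. (1 + c) ^ card (D \<inter> set (drop t es))) \<le> fact N * (1 + c * p) ^ card D"
    unfolding P_def
  proof (rule mgf_gen[OF _ b(8) c0 b(2)])
    fix J assume J: "J \<subseteq> D"
    show "real (card {x \<in> permutations_of_set A. J \<subseteq> set (drop t x)}) \<le> fact N * p ^ card J"
      using drop_bound[OF fA _ tA, of J] J DA unfolding p_def N_def by auto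
  qed simp
  have "(1 + c * p) ^ card D \<le> exp (real (card D) * (c * p))" by (rule pow_exp_le) (use c0 b in simp)
  also have "real (card D) * (c * p) = c * mu" unfolding mu_def by simp
  finally have mgf2: "(\<Sum>es\<in>P. (1 + c) ^ card (D \<inter> set (drop t es))) \<le> fact N * exp (c * mu)"
    using mgf by (meson mult_left_mono order_trans fact_ge_zero)
  define E where "E = {es \<in> P. mu + lam \<le> real (card (D \<inter> set (drop t es)))}"
  have "E = {es \<in> P. exp (th * (mu + lam)) \<le> (1 + c) ^ card (D \<inter> set (drop t es))}"
    unfolding E_def fexp using b by (auto simp: mult_le_cancel_left_pos)
  hence "real (card E) * exp (th * (mu + lam)) \<le> (\<Sum>es\<in>P. (1 + c) ^ card (D \<inter> set (drop t es)))"
    using markov_sum[OF b(7), of "\<lambda>es. (1 + c) ^ card (D \<inter> set (drop t es))"] c0 by simp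
  hence "real (card E) * exp (th * (mu + lam)) \<le> fact N * exp (c * mu)" using mgf2 by linarith
  hence "real (card E) \<le> fact N * exp (c * mu) / exp (th * (mu + lam))" by (simp add: field_simps)
  also have "\<dots> = fact N * exp (c * mu - th * (mu + lam))" by (simp add: exp_diff)
  also have "\<dots> \<le> fact N * exp (- lam\<^sup>2 / (4 * mu))"
  proof -
    have "c \<le> th + th * th" unfolding c_def using R1[of th] b by simp
    hence "c * mu \<le> (th + th * th) * mu" using b by (intro mult_right_mono) auto
    moreover have "(th + th * th) * mu - th * (mu + lam) = - lam\<^sup>2 / (4 * mu)"
      unfolding th_def using b by (simp add: field_simps power2_eq_square)
    ultimately have "c * mu - th * (mu + lam) \<le> - lam\<^sup>2 / (4 * mu)" by linarith
    thus ?thesis by (intro mult_left_mono) auto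
  qed
  finally show ?thesis unfolding E_def .
qed

lemma lower: "real (card {es \<in> P. real (card (D \<inter> set (drop t es))) \<le> mu - lam}) \<le> fact N * exp (- lam\<^sup>2 / (4 * mu))"
proof -
  note b = basics
  define c where "c = exp th - 1"
  define q where "q = real t / real N"
  have q: "q = 1 - p" unfolding q_def p_def using b by (simp add: field_simps)
  have q0: "0 \<le> q" unfolding q_def by simp
  have c0: "0 \<le> c" unfolding c_def using b by simp
  have fexp: "(1 + c) ^ m = exp (th * real m)" for m by (simp add: c_def exp_of_nat2_mult)
  have mgf: "(\<Sum>es\<in>P. (1 + c) ^ card (D \<inter> set (take t es))) \<le> fact N * (1 + c * q) ^ card D"
    unfolding P_def
  proof (rule mgf_gen[OF _ b(8) c0 q0])
    fix J assume J: "J \<subseteq> D"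
    show "real (card {x \<in> permutations_of_set A. J \<subseteq> set (take t x)}) \<le> fact N * q ^ card J"
      using take_bound[OF fA _ tA, of J] J DA unfolding q_def N_def by auto
  qed simp
  have key: "(1 + c * q) * exp (- th) = 1 + p * (exp (- th) - 1)"
    unfolding q c_def by (simp add: algebra_simps exp_minus_inverse)
  have "(1 + c * q) ^ card D * exp (- th * real (card D)) = ((1 + c * q) * exp (- th)) ^ card D"
    by (simp only: exp_of_nat2_mult power_mult_distrib)
  also have "\<dots> = (1 + p * (exp (- th) - 1)) ^ card D" using key by simp
  also have "\<dots> \<le> exp (real (card D) * (p * (exp (- th) - 1)))"
  proof (rule pow_exp_le)
    have "p * (exp (- th) - 1) \<ge> p * (0 - 1)" using b by (intro mult_left_mono) auto
    hence "p * (exp (- th) - 1) \<ge> - p" by simp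
    thus "0 \<le> 1 + p * (exp (- th) - 1)" using b by linarith
  qed
  also have "real (card D) * (p * (exp (- th) - 1)) = mu * (exp (- th) - 1)" unfolding mu_def by simp
  finally have m2: "(1 + c * q) ^ card D * exp (- th * real (card D)) \<le> exp (mu * (exp (- th) - 1))" .
  define E where "E = {es \<in> P. real (card (D \<inter> set (drop t es))) \<le> mu - lam}"
  have "E \<subseteq> {es \<in> P. exp (th * (real (card D) - mu + lam)) \<le> (1 + c) ^ card (D \<inter> set (take t es))}"
  proof
    fix es assume "es \<in> E"
    hence es: "es \<in> P" "real (card (D \<inter> set (drop t es))) \<le> mu - lam" unfolding E_def by auto
    have "card (D \<inter> set (drop t es)) + card (D \<inter> set (take t es)) = card D"
      using split_card[OF _ DA fA] es(1) unfolding P_def by blast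
    hence "real (card D) - mu + lam \<le> real (card (D \<inter> set (take t es)))" using es(2) by linarith
    hence "exp (th * (real (card D) - mu + lam)) \<le> (1 + c) ^ card (D \<inter> set (take t es))"
      unfolding fexp using b by (simp add: mult_le_cancel_left_pos)
    thus "es \<in> {es \<in> P. exp (th * (real (card D) - mu + lam)) \<le> (1 + c) ^ card (D \<inter> set (take t es))}"
      using es by simp
  qed
  hence "card E \<le> card {es \<in> P. exp (th * (real (card D) - mu + lam)) \<le> (1 + c) ^ card (D \<inter> set (take t es))}"
    using b by (intro card_mono) auto
  hence "real (card E) * exp (th * (real (card D) - mu + lam)) \<le>
     real (card {es \<in> P. exp (th * (real (card D) - mu + lam)) \<le> (1 + c) ^ card (D \<inter> set (take t es))}) * exp (th * (real (card D) - mu + lam))"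
    by (intro mult_right_mono) auto
  also have "\<dots> \<le> (\<Sum>es\<in>P. (1 + c) ^ card (D \<inter> set (take t es)))"
    using markov_sum[OF b(7), of "\<lambda>es. (1 + c) ^ card (D \<inter> set (take t es))"] c0 by simp
  also have "\<dots> \<le> fact N * (1 + c * q) ^ card D" by (rule mgf)
  finally have "real (card E) \<le> fact N * (1 + c * q) ^ card D / exp (th * (real (card D) - mu + lam))"
    by (simp add: field_simps)
  also have "\<dots> = fact N * ((1 + c * q) ^ card D * exp (- th * real (card D))) * exp (th * (mu - lam))"
    by (simp add: field_simps exp_diff exp_add exp_minus) 
  also have "\<dots> \<le> fact N * exp (mu * (exp (- th) - 1)) * exp (th * (mu - lam))"
    by (intro mult_right_mono mult_left_mono m2) auto
  also have "\<dots> = fact N * exp (mu * (exp (- th) - 1) + th * (mu - lam))" by (simp add: exp_add)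
  also have "\<dots> \<le> fact N * exp (- lam\<^sup>2 / (4 * mu))"
  proof -
    have "exp (- th) - 1 \<le> - th + th * th" using R2[of th] b by simp
    hence "mu * (exp (- th) - 1) \<le> mu * (- th + th * th)" using b by (intro mult_left_mono) auto
    moreover have "mu * (- th + th * th) + th * (mu - lam) = - lam\<^sup>2 / (4 * mu)"
      unfolding th_def using b by (simp add: field_simps power2_eq_square)
    ultimately have "mu * (exp (- th) - 1) + th * (mu - lam) \<le> - lam\<^sup>2 / (4 * mu)" by linarith
    thus ?thesis by (intro mult_left_mono) auto
  qed
  finally show ?thesis unfolding E_def .
qed

end


lemma Xt_eq:
  assumes es: "es \<in> permutations_of_set A" and fA: "finite A" and M: "card A = M"
  shows "Xt M es t v = card ({e \<in> A. v \<in> e} \<inter> set (drop t es))"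
proof -
  have dist: "distinct es" and se: "set es = A" using es by (auto dest: permutations_of_setD)
  have len: "length es = M" using length_finite_permutations_of_set[OF es] M by simp
  define I where "I = {i. t \<le> i \<and> i < M \<and> v \<in> es ! i}"
  have inj: "inj_on ((!) es) I" unfolding I_def using dist len by (intro inj_on_nth) auto
  have "(!) es ` I = {e \<in> A. v \<in> e} \<inter> set (drop t es)"
  proof (intro equalityI subsetI)
    fix e assume "e \<in> (!) es ` I"
    then obtain i where i: "t \<le> i" "i < M" "v \<in> es ! i" "e = es ! i" unfolding I_def by blast
    have "es ! i \<in> set es" using i len by simp
    moreover have "drop t es ! (i - t) = es ! i" using i len by simp
    moreover have "i - t < length (drop t es)" using i len by simp
    ultimately have "es ! i \<in> set (drop t es)" using nth_mem[of "i - t" "drop t es"] by simp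
    moreover have "es ! i \<in> A" using se \<open>es ! i \<in> set es\<close> by simp
    ultimately have "es ! i \<in> set (drop t es)" "es ! i \<in> A" by simp_all
    thus "e \<in> {e \<in> A. v \<in> e} \<inter> set (drop t es)" using i by simp
  next
    fix e assume e: "e \<in> {e \<in> A. v \<in> e} \<inter> set (drop t es)"
    then obtain j where j: "j < length (drop t es)" "drop t es ! j = e" by (auto simp: in_set_conv_nth)
    have "es ! (t + j) = e" using j len by simp
    moreover have "t + j \<in> I" using j len e calculation unfolding I_def by auto
    ultimately show "e \<in> (!) es ` I" by (metis image_eqI)
  qed
  hence "card ({e \<in> A. v \<in> e} \<inter> set (drop t es)) = card I" using inj by (metis card_image)
  thus ?thesis unfolding Xt_def I_def by simp
qed

definition Ev :: "nat \<Rightarrow> nat \<Rightarrow> nat \<Rightarrow> real \<Rightarrow> real \<Rightarrow> nat set list set" where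
  "Ev n k d eps a = {es. \<forall>t::nat. real t \<le> (1 - eps) * real (n * d div k) \<longrightarrow>
              (\<forall>v\<in>{1..n}.
                 let M = n * d div k; \<tau> = 1 - real t / real M in
                 \<bar>real (Xt M es t v) - \<tau> * real d\<bar> \<le> sqrt (a * \<tau> * real d * ln (real n))
                 \<and> sqrt (a * \<tau> * real d * ln (real n)) \<le> \<tau> * real d / 2 - 1)}"

lemma perH:
  fixes n k d M :: nat and eps a :: real
  assumes reg: "regular_kgraph n k d H" and k: "0 < k" and M: "M = n * d div k" and Mpos: "0 < M"
    and lnpos: "0 < a * ln (real n)"
    and det: "\<And>t::nat. real t \<le> (1 - eps) * real M \<Longrightarrow> t \<le> M \<and>
        sqrt (a * (1 - real t / real M) * real d * ln (real n)) \<le> (1 - real t / real M) * real d / 2 - 1"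
  shows "real (card (permutations_of_set H - Ev n k d eps a)) \<le> 2 * real (M + 1) * real n * fact M * exp (- (a * ln (real n)) / 4)"
proof -
  have fH: "finite H" and kH: "k * card H = n * d" using regular_card[OF reg] by auto
  have "n * d div k = (k * card H) div k" using kH by simp
  also have "\<dots> = card H" using k by simp
  finally have cH: "card H = M" unfolding M by simp
  have deg: "\<And>v. v \<in> {1..n} \<Longrightarrow> card {e\<in>H. v \<in> e} = d" using reg unfolding regular_kgraph_def by auto
  define P where "P = permutations_of_set H"
  define T0 where "T0 = {t \<in> {0..M}. real t \<le> (1 - eps) * real M}"
  define tau where "tau t = 1 - real t / real M" for t :: nat
  define lam where "lam t = sqrt (a * tau t * real d * ln (real n))" for t :: nat
  define Dv where "Dv v = {e\<in>H. v \<in> e}" for v :: nat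
  define Bu where "Bu t v = {es \<in> P. tau t * real d + lam t \<le> real (card (Dv v \<inter> set (drop t es)))}" for t v
  define Bl where "Bl t v = {es \<in> P. real (card (Dv v \<inter> set (drop t es))) \<le> tau t * real d - lam t}" for t v
  have sub: "P - Ev n k d eps a \<subseteq> (\<Union>t\<in>T0. \<Union>v\<in>{1..n}. Bu t v \<union> Bl t v)"
  proof
    fix es assume es: "es \<in> P - Ev n k d eps a"
    have nE: "es \<notin> Ev n k d eps a" using es by simp
    have "\<exists>t::nat. real t \<le> (1 - eps) * real M \<and> (\<exists>v\<in>{1..n}.
       \<not> (\<bar>real (Xt M es t v) - tau t * real d\<bar> \<le> lam t \<and> lam t \<le> tau t * real d / 2 - 1))"
      using nE unfolding Ev_def M[symmetric] tau_def lam_def Let_def by blast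
    then obtain t v where t: "real t \<le> (1 - eps) * real M" and v: "v \<in> {1..n}"
      and bad: "\<not> (\<bar>real (Xt M es t v) - tau t * real d\<bar> \<le> lam t \<and> lam t \<le> tau t * real d / 2 - 1)"
      by blast
    have dt: "t \<le> M" "lam t \<le> tau t * real d / 2 - 1" using det[OF t] unfolding lam_def tau_def by auto
    have "Xt M es t v = card (Dv v \<inter> set (drop t es))" unfolding Dv_def
      using Xt_eq[of es H M t v] es fH cH unfolding P_def by auto
    hence "\<bar>real (card (Dv v \<inter> set (drop t es))) - tau t * real d\<bar> > lam t" using bad dt by auto
    hence "es \<in> Bu t v \<union> Bl t v" using es unfolding Bu_def Bl_def by auto
    moreover have "t \<in> T0" unfolding T0_def using t dt by simp
    ultimately show "es \<in> (\<Union>t\<in>T0. \<Union>v\<in>{1..n}. Bu t v \<union> Bl t v)" using v by blast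
  qed
  define B where "B = fact M * exp (- (a * ln (real n)) / 4)"
  have each: "real (card (Bu t v)) \<le> B \<and> real (card (Bl t v)) \<le> B" if t: "t \<in> T0" and v: "v \<in> {1..n}" for t v
  proof -
    have tr: "real t \<le> (1 - eps) * real M" using t unfolding T0_def by simp
    have dt: "t \<le> M" "lam t \<le> tau t * real d / 2 - 1" using det[OF tr] unfolding lam_def tau_def by auto
    have tau0: "0 \<le> tau t" unfolding tau_def using dt(1) Mpos by (simp add: field_simps)
    have "0 \<le> (a * ln (real n)) * (tau t * real d)" using tau0 lnpos by simp
    hence "0 \<le> a * tau t * real d * ln (real n)" by (simp add: algebra_simps)
    hence l0: "0 \<le> lam t" unfolding lam_def by simp
    have td: "2 \<le> tau t * real d" using dt l0 by linarith
    have dpos: "0 < real d"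
    proof (rule ccontr)
      assume "\<not> 0 < real d" hence "real d = 0" by simp
      thus False using td by simp
    qed
    have taupos: "0 < tau t"
    proof (rule ccontr)
      assume "\<not> 0 < tau t" hence "tau t = 0" using tau0 by simp
      thus False using td by simp
    qed
    have "0 < (a * ln (real n)) * (tau t * real d)" using taupos dpos lnpos by simp
    hence "0 < a * tau t * real d * ln (real n)" by (simp add: algebra_simps)
    hence lpos: "0 < lam t" unfolding lam_def by simp
    have cD: "card (Dv v) = d" using deg[OF v] unfolding Dv_def .
    have tauM: "tau t = (real M - real t) / real M" unfolding tau_def using Mpos by (simp add: field_simps)
    interpret ts: tailsetup H "Dv v" t "lam t"
    proof
      show "finite H" by (rule fH)
      show "Dv v \<subseteq> H" unfolding Dv_def by auto
      show "0 < card H" using cH Mpos by simp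
      show "t \<le> card H" using cH dt by simp
      show "0 < lam t" by (rule lpos)
      show "lam t \<le> 2 * (real (card (Dv v)) * ((real (card H) - real t) / real (card H)))"
      proof -
        have "lam t \<le> 2 * (tau t * real d)" using dt(2) td by linarith
        thus ?thesis using cD cH tauM by (simp add: mult.commute)
      qed
    qed
    have N: "ts.N = M" unfolding ts.N_def using cH by simp
    have mu: "ts.mu = tau t * real d" unfolding ts.mu_def ts.p_def N tauM cD by simp
    have ex: "lam t ^ 2 / (4 * ts.mu) = a * ln (real n) / 4"
    proof -
      have eq: "a * tau t * real d * ln (real n) = (a * ln (real n)) * (tau t * real d)" by (simp add: algebra_simps)
      have "0 \<le> (a * ln (real n)) * (tau t * real d)" using taupos dpos lnpos by simp
      hence "0 \<le> a * tau t * real d * ln (real n)" by (simp add: algebra_simps)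
      hence "lam t ^ 2 = a * tau t * real d * ln (real n)" unfolding lam_def by simp
      thus ?thesis unfolding mu using taupos dpos by (simp add: field_simps)
    qed
    have "real (card (Bu t v)) \<le> fact M * exp (- (lam t ^ 2) / (4 * ts.mu))"
      using ts.upper unfolding Bu_def P_def ts.P_def N mu by simp
    moreover have "real (card (Bl t v)) \<le> fact M * exp (- (lam t ^ 2) / (4 * ts.mu))"
      using ts.lower unfolding Bl_def P_def ts.P_def N mu by simp
    moreover have ee: "- (lam t ^ 2) / (4 * ts.mu) = - (a * ln (real n)) / 4" using ex by (metis minus_divide_left)
    ultimately show ?thesis unfolding B_def ee[symmetric] by blast
  qed
  have fin: "finite P" unfolding P_def by simp
  have "card (P - Ev n k d eps a) \<le> card (\<Union>t\<in>T0. \<Union>v\<in>{1..n}. Bu t v \<union> Bl t v)"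
    by (rule card_mono[OF _ sub]) (simp add: T0_def Bu_def Bl_def fin)
  also have "\<dots> \<le> (\<Sum>t\<in>T0. card (\<Union>v\<in>{1..n}. Bu t v \<union> Bl t v))" by (rule card_UN_le) (simp add: T0_def)
  also have "\<dots> \<le> (\<Sum>t\<in>T0. \<Sum>v\<in>{1..n}. card (Bu t v \<union> Bl t v))" by (intro sum_mono card_UN_le) simp
  also have "\<dots> \<le> (\<Sum>t\<in>T0. \<Sum>v\<in>{1..n}. card (Bu t v) + card (Bl t v))" by (intro sum_mono card_Un_le)
  finally have c1: "card (P - Ev n k d eps a) \<le> (\<Sum>t\<in>T0. \<Sum>v\<in>{1..n}. card (Bu t v) + card (Bl t v))" .
  have "real (card (P - Ev n k d eps a)) \<le> real (\<Sum>t\<in>T0. \<Sum>v\<in>{1..n}. card (Bu t v) + card (Bl t v))"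
    using c1 by (simp only: of_nat_le_iff)
  also have "\<dots> = (\<Sum>t\<in>T0. \<Sum>v\<in>{1..n}. real (card (Bu t v)) + real (card (Bl t v)))" by simp
  also have "\<dots> \<le> (\<Sum>t\<in>T0. \<Sum>v\<in>{1..n}. 2 * B)"
  proof (intro sum_mono)
    fix t v assume "t \<in> T0" "v \<in> {1..n}"
    from each[OF this] show "real (card (Bu t v)) + real (card (Bl t v)) \<le> 2 * B" by linarith
  qed
  also have "\<dots> = real (card T0) * real n * (2 * B)" by simp
  also have "\<dots> \<le> real (M + 1) * real n * (2 * B)"
  proof -
    have "card T0 \<le> card {0..M}" unfolding T0_def by (intro card_mono) auto
    hence "real (card T0) \<le> real (M + 1)" by simp
    moreover have "0 \<le> B" unfolding B_def by simp
    ultimately show ?thesis by (intro mult_right_mono) auto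
  qed
  finally show ?thesis unfolding P_def B_def by (simp add: algebra_simps)
qed


lemma powr_cube: fixes x :: real assumes "0 \<le> x" shows "(x powr (1/3)) ^ 3 = x"
proof (cases "x = 0")
  case True thus ?thesis by simp
next
  case False
  hence "(x powr (1/3)) ^ 3 = x powr (real 3 * (1/3))" by (simp add: powr_power)
  also have "\<dots> = x" using assms False by simp
  finally show ?thesis .
qed

lemma div_lower: fixes n m :: nat assumes "0 < m" "2 * m \<le> n" shows "real n / (2 * real m) \<le> real (n div m)"
proof -
  have "n = m * (n div m) + n mod m" by simp
  moreover have "n mod m < m" using assms by simp
  ultimately have "n < m * (n div m) + m" by linarith
  hence "real n < real m * real (n div m) + real m" by (metis of_nat_add of_nat_less_iff of_nat_mult)
  moreover have "2 * real m \<le> real n" using assms(2) by simp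
  ultimately have "real n \<le> 2 * real m * real (n div m)" by (simp add: algebra_simps)
  thus ?thesis using assms by (simp add: field_simps)
qed

lemma bind_prob_ge:
  assumes fG: "finite G" and neG: "G \<noteq> {}" and fS: "\<And>H. H \<in> G \<Longrightarrow> finite (S H) \<and> S H \<noteq> {}"
    and b: "\<And>H. H \<in> G \<Longrightarrow> 1 - \<delta> \<le> measure_pmf.prob (pmf_of_set (S H)) E"
  shows "1 - \<delta> \<le> measure_pmf.prob (pmf_of_set G \<bind> (\<lambda>H. pmf_of_set (S H))) E"
proof -
  have ind: "measure_pmf.prob p E = measure_pmf.expectation p (indicator E)" for p :: "'b pmf"
    by (simp add: integral_indicator)
  have "measure_pmf.prob (pmf_of_set G \<bind> (\<lambda>H. pmf_of_set (S H))) E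
      = (\<Sum>H\<in>G. measure_pmf.expectation (pmf_of_set (S H)) (indicator E) / real (card G))"
    unfolding ind using fG neG fS by (subst pmf_expectation_bind_pmf_of_set) (auto simp: divide_inverse ac_simps)
  also have "\<dots> = (\<Sum>H\<in>G. measure_pmf.prob (pmf_of_set (S H)) E / real (card G))" unfolding ind ..
  also have "\<dots> \<ge> (\<Sum>H\<in>G. (1 - \<delta>) / real (card G))"
    using b fG neG by (intro sum_mono divide_right_mono) auto
  also have "(\<Sum>H\<in>G. (1 - \<delta>) / real (card G)) = 1 - \<delta>" using fG neG by simp
  finally show ?thesis .
qed


lemma main_n:
  fixes k n d :: nat and eps a C :: real
  assumes a_def: "a = 4 * (real k + 2)" and C_def: "C = 16 * a * (4 * real k) ^ k"
  assumes k2: "2 \<le> k" and n: "4 * k \<le> n" and d0: "0 < d" and dvd: "k dvd n * d"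
    and e0: "0 < eps" and e1: "eps < 1"
    and hyp: "C * ((real d / real n ^ (k - 1) + ln (real n) / real d) powr (1/3) + 1 / real n) \<le> eps"
  shows "1 - 4 / real n \<le> measure_pmf.prob (regular_kgraph_process n k d) (Ev n k d eps a)"
proof -
  have n3: "3 \<le> n" using n k2 by simp
  have npos: "0 < real n" using n3 by simp
  have a16: "16 \<le> a" using k2 unfolding a_def by simp
  have pk: "1 \<le> (4 * real k) ^ k" using k2 by (intro one_le_power) simp
  have C16a: "16 * a \<le> C" unfolding C_def using pk a16 by simp
  have C1: "1 \<le> C" using C16a a16 by simp
  have Cpk: "(4 * real k) ^ (k - 1) \<le> C"
  proof -
    have "(4 * real k) ^ (k - 1) \<le> (4 * real k) ^ k" using k2 by (intro power_increasing) auto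
    moreover have "1 * (4 * real k) ^ k \<le> (16 * a) * (4 * real k) ^ k"
      using a16 pk by (intro mult_right_mono) auto
    hence "(4 * real k) ^ k \<le> C" unfolding C_def by (simp only: mult_1)
    ultimately show ?thesis by (rule order_trans)
  qed
  have C3: "C \<le> C ^ 3"
  proof -
    have "1 * 1 \<le> C * C" using C1 by (intro mult_mono) auto
    hence "1 \<le> C * C" by simp
    hence "C * 1 \<le> C * (C * C)" using C1 by (intro mult_left_mono) auto
    thus ?thesis by (simp add: power3_eq_cube)
  qed
  have ln1: "1 \<le> ln (real n)"
  proof -
    have "exp 1 \<le> real n" using e_less_272 n3 by linarith
    thus ?thesis using npos by (simp add: ln_ge_iff)
  qed
  define A where "A = real d / real n ^ (k - 1)"
  define B where "B = ln (real n) / real d"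
  define S where "S = (A + B) powr (1/3)"
  have A0: "0 \<le> A" and B0: "0 \<le> B" unfolding A_def B_def using ln1 by simp_all
  have "C * S \<le> eps"
  proof -
    have "0 \<le> C * (1 / real n)" using C1 npos by simp
    thus ?thesis using hyp unfolding S_def A_def B_def by (simp add: algebra_simps)
  qed
  have cubeA: "C ^ 3 * A \<le> eps ^ 3" and cubeB: "C ^ 3 * B \<le> eps ^ 3"
  proof -
    have SA: "A powr (1/3) \<le> S" unfolding S_def using A0 B0 by (intro powr_mono2) auto
    have SB: "B powr (1/3) \<le> S" unfolding S_def using A0 B0 by (intro powr_mono2) auto
    have "C * A powr (1/3) \<le> eps" using SA \<open>C * S \<le> eps\<close> C1 by (meson mult_left_mono order.trans zero_le_one order_trans)
    hence "(C * A powr (1/3)) ^ 3 \<le> eps ^ 3" using C1 by (intro power_mono) auto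
    thus "C ^ 3 * A \<le> eps ^ 3" using powr_cube[OF A0] by (simp add: power_mult_distrib)
    have "C * B powr (1/3) \<le> eps" using SB \<open>C * S \<le> eps\<close> C1 by (meson mult_left_mono order.trans zero_le_one order_trans)
    hence "(C * B powr (1/3)) ^ 3 \<le> eps ^ 3" using C1 by (intro power_mono) auto
    thus "C ^ 3 * B \<le> eps ^ 3" using powr_cube[OF B0] by (simp add: power_mult_distrib)
  qed
  have e3a: "eps ^ 3 \<le> eps"
  proof -
    have "eps * eps \<le> 1" using e0 e1 by (intro mult_le_one) auto
    hence "eps * (eps * eps) \<le> eps * 1" using e0 by (intro mult_left_mono) auto
    thus ?thesis by (simp add: power3_eq_cube)
  qed
  have e3: "eps ^ 3 \<le> eps" "eps ^ 3 < 1" using e3a e1 by linarith+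
  have nk: "0 < real n ^ (k - 1)" using npos by simp
  have dC: "C ^ 3 * real d < real n ^ (k - 1)"
  proof -
    have "C ^ 3 * A < 1" using cubeA e3 by linarith
    thus ?thesis unfolding A_def using nk by (simp add: field_simps)
  qed
  have lnC: "C ^ 3 * ln (real n) \<le> eps * real d"
  proof -
    have "C ^ 3 * B \<le> eps" using cubeB e3 by linarith
    thus ?thesis unfolding B_def using d0 by (simp add: field_simps)
  qed
  have dle1: "real d < real n ^ (k - 1)"
  proof -
    have "1 * real d \<le> C ^ 3 * real d" using C1 C3 by (intro mult_right_mono) auto
    thus ?thesis using dC by linarith
  qed
  have "real d < real (n ^ (k - 1))" using dle1 by simp
  hence dlen: "d \<le> n ^ (k - 1)" by linarith
  have ex: "\<exists>H. regular_kgraph n k d H"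
  proof (rule exists_regular[OF k2 _ dvd])
    show "2 * k \<le> n" using n by simp
    have q: "real n / (4 * real k) \<le> real (n div (2 * k))"
      using div_lower[of "2*k" n] n k2 by (simp add: mult.assoc)
    have "real d * (4 * real k) ^ (k - 1) \<le> real d * C ^ 3"
      using Cpk C3 by (intro mult_left_mono) auto
    also have "\<dots> < real n ^ (k - 1)" using dC by (simp add: mult.commute)
    finally have "real d < real n ^ (k - 1) / (4 * real k) ^ (k - 1)" using k2 by (simp add: field_simps)
    also have "\<dots> = (real n / (4 * real k)) ^ (k - 1)" by (simp add: power_divide)
    also have "\<dots> \<le> real (n div (2 * k)) ^ (k - 1)" using q k2 by (intro power_mono) auto
    finally have "real d < real ((n div (2 * k)) ^ (k - 1))" by simp
    thus "d \<le> (n div (2 * k)) ^ (k - 1)" by linarith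
  qed
  define G where "G = {H. regular_kgraph n k d H}"
  have fG: "finite G"
  proof -
    have "G \<subseteq> Pow (Pow {1..n})" unfolding G_def regular_kgraph_def by auto
    thus ?thesis by (rule finite_subset) simp
  qed
  have neG: "G \<noteq> {}" using ex unfolding G_def by auto
  define M where "M = n * d div k"
  have kM: "k * M = n * d" unfolding M_def using dvd by simp
  have "0 < n * d" using d0 n3 by simp
  hence Mpos: "0 < M" using kM by (intro gr0I) auto
  have Mle: "M \<le> n ^ k"
  proof -
    have "k * M \<le> n * n ^ (k - 1)" using kM dlen by simp
    also have "n * n ^ (k - 1) = n ^ k" using power_Suc[of n "k - 1"] k2 by simp
    finally have "k * M \<le> n ^ k" .
    moreover have "M \<le> k * M" using k2 by simp
    ultimately show ?thesis by linarith
  qed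
  have apos: "0 < a * ln (real n)" using a16 ln1 by simp
  have det: "t \<le> M \<and> sqrt (a * (1 - real t / real M) * real d * ln (real n)) \<le> (1 - real t / real M) * real d / 2 - 1"
    if t: "real t \<le> (1 - eps) * real M" for t :: nat
  proof -
    have Mr: "0 < real M" using Mpos by simp
    have "(1 - eps) * real M \<le> 1 * real M" using e0 Mr by (intro mult_right_mono) auto
    hence "real t \<le> real M" using t by linarith
    hence tM: "t \<le> M" by simp
    define x where "x = (1 - real t / real M) * real d"
    have tau: "eps \<le> 1 - real t / real M" using t Mr by (simp add: field_simps)
    have "eps * real d \<le> x" unfolding x_def using tau d0 by (intro mult_right_mono) auto
    hence xl: "C ^ 3 * ln (real n) \<le> x" using lnC by linarith
    have x16: "16 \<le> x"
    proof -
      have "16 \<le> C" using C16a a16 by linarith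
      also have "\<dots> \<le> C ^ 3" by (rule C3)
      also have "\<dots> \<le> C ^ 3 * ln (real n)" using ln1 C1 by (simp add: mult_le_cancel_left1)
      finally show ?thesis using xl by linarith
    qed
    have C3p: "0 < C ^ 3" using C1 by simp
    have lnx: "ln (real n) \<le> x / C ^ 3" using xl C3p by (simp add: field_simps)
    have "a * (1 - real t / real M) * real d * ln (real n) = a * x * ln (real n)" unfolding x_def by simp
    also have "\<dots> \<le> a * x * (x / C ^ 3)" using lnx a16 x16 by (intro mult_left_mono) auto
    also have "\<dots> \<le> (x / 4) ^ 2"
    proof -
      have "16 * a \<le> C ^ 3" using C16a C3 by linarith
      hence "a / C ^ 3 \<le> 1 / 16" using C3p by (simp add: field_simps)
      hence "(x * x) * (a / C ^ 3) \<le> (x * x) * (1 / 16)" by (intro mult_left_mono) auto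
      thus ?thesis by (simp add: power2_eq_square field_simps)
    qed
    finally have "sqrt (a * (1 - real t / real M) * real d * ln (real n)) \<le> sqrt ((x / 4) ^ 2)"
      by (rule real_sqrt_le_mono)
    also have "\<dots> = x / 4" using x16 by simp
    also have "\<dots> \<le> x / 2 - 1" using x16 by simp
    finally show ?thesis using tM unfolding x_def by simp
  qed
  define \<delta> where "\<delta> = 2 * real (M + 1) * real n * exp (- (a * ln (real n)) / 4)"
  have perH': "1 - \<delta> \<le> measure_pmf.prob (pmf_of_set (permutations_of_set H)) (Ev n k d eps a)" if H: "H \<in> G" for H
  proof -
    have reg: "regular_kgraph n k d H" using H unfolding G_def by simp
    have fH: "finite H" using regular_card[OF reg] by simp
    have "k * card H = k * M" using regular_card(2)[OF reg] kM by simp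
    hence cH: "card H = M" using k2 by simp
    have bd: "real (card (permutations_of_set H - Ev n k d eps a)) \<le> \<delta> * fact M"
      using perH[OF reg _ M_def Mpos apos det] k2 unfolding \<delta>_def by (simp add: algebra_simps)
    have cP: "card (permutations_of_set H) = fact M" using fH cH by simp
    have fP: "finite (permutations_of_set H)" by simp
    have "card (permutations_of_set H) = card (permutations_of_set H \<inter> Ev n k d eps a) + card (permutations_of_set H - Ev n k d eps a)"
      using fP by (rule card_Int_Diff)
    hence "real (fact M) = real (card (permutations_of_set H \<inter> Ev n k d eps a)) + real (card (permutations_of_set H - Ev n k d eps a))"
      using cP by simp
    hence "real (fact M) - \<delta> * fact M \<le> real (card (permutations_of_set H \<inter> Ev n k d eps a))" using bd by simp
    moreover have fpos: "0 < (fact M :: real)" by simp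
    ultimately have "1 - \<delta> \<le> real (card (permutations_of_set H \<inter> Ev n k d eps a)) / fact M"
      by (simp add: field_simps)
    thus ?thesis using fH cP by (simp add: measure_pmf_of_set)
  qed
  have "1 - \<delta> \<le> measure_pmf.prob (regular_kgraph_process n k d) (Ev n k d eps a)"
  proof -
    have eqS: "{es. distinct es \<and> set es = H} = permutations_of_set H" for H :: "nat set set"
      by (auto simp: permutations_of_set_def)
    have "regular_kgraph_process n k d = pmf_of_set G \<bind> (\<lambda>H. pmf_of_set (permutations_of_set H))"
      unfolding regular_kgraph_process_def G_def eqS ..
    moreover have "1 - \<delta> \<le> measure_pmf.prob (pmf_of_set G \<bind> (\<lambda>H. pmf_of_set (permutations_of_set H))) (Ev n k d eps a)"
    proof (rule bind_prob_ge[OF fG neG])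
      fix H assume "H \<in> G"
      hence "finite H" using regular_card[of n k d H] unfolding G_def by simp
      thus "finite (permutations_of_set H) \<and> permutations_of_set H \<noteq> {}" by simp
    next
      fix H assume "H \<in> G" thus "1 - \<delta> \<le> measure_pmf.prob (pmf_of_set (permutations_of_set H)) (Ev n k d eps a)"
        by (rule perH')
    qed
    ultimately show ?thesis by simp
  qed
  moreover have "\<delta> \<le> 4 / real n"
  proof -
    have e: "exp (- (a * ln (real n)) / 4) = 1 / real n ^ (k + 2)"
    proof -
      have e1: "- (a * ln (real n)) / 4 = - (real (k + 2) * ln (real n))" unfolding a_def by (simp add: field_simps)
      have e2: "exp (real (k + 2) * ln (real n)) = real n ^ (k + 2)"
      proof -
        have "exp (real (k + 2) * ln (real n)) = exp (ln (real n)) ^ (k + 2)" by (rule exp_of_nat_mult)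
        also have "\<dots> = real n ^ (k + 2)" using npos by simp
        finally show ?thesis .
      qed
      have "exp (- (a * ln (real n)) / 4) = inverse (exp (real (k + 2) * ln (real n)))"
        unfolding e1 by (rule exp_minus)
      also have "\<dots> = 1 / real n ^ (k + 2)" unfolding e2 by (rule inverse_eq_divide)
      finally show ?thesis .
    qed
    have M1: "real (M + 1) \<le> 2 * real n ^ k"
    proof -
      have "real M \<le> real (n ^ k)" using Mle by (simp only: of_nat_le_iff)
      hence "real M \<le> real n ^ k" by simp
      moreover have "1 \<le> real n ^ k" using npos n3 by (intro one_le_power) simp
      ultimately show ?thesis by linarith
    qed
    define X where "X = real n ^ k * real n"
    have Xp: "0 < X" unfolding X_def using npos by simp
    have nk2: "real n ^ (k + 2) = X * real n" unfolding X_def by (simp add: power_add power2_eq_square)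
    have "\<delta> = 2 * real (M + 1) * real n * (1 / real n ^ (k + 2))" unfolding \<delta>_def e by simp
    also have "\<dots> = (2 * real (M + 1) * real n) / (X * real n)" unfolding nk2 by simp
    also have "\<dots> \<le> (4 * X) / (X * real n)"
    proof (rule divide_right_mono)
      have "2 * real (M + 1) * real n \<le> 2 * (2 * real n ^ k) * real n" using M1 npos by (intro mult_right_mono) auto
      thus "2 * real (M + 1) * real n \<le> 4 * X" unfolding X_def by simp
      show "0 \<le> X * real n" using Xp npos by simp
    qed
    also have "(4 * X) / (X * real n) = 4 / real n" using Xp by simp
    finally show ?thesis .
  qed
  ultimately show ?thesis by linarith
qed

theorem claim3p1:
  fixes k :: nat
  assumes "k \<ge> 2"
  shows "\<exists>a::real. a > 0 \<and> (\<exists>C'::real. \<forall>(d::nat \<Rightarrow> nat) (\<epsilon>::nat \<Rightarrow> real).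
    (\<forall>\<^sub>F n in sequentially.
        0 < d n \<and> k dvd n * d n \<and> 0 < \<epsilon> n \<and> \<epsilon> n < 1 \<and>
        (1 - \<epsilon> n) * real (n * d n div k) \<in> \<int> \<and>
        C' * ((real (d n) / real n ^ (k - 1) + ln (real n) / real (d n)) powr (1/3) + 1 / real n)
          \<le> \<epsilon> n)
    \<longrightarrow>
    (\<lambda>n. measure_pmf.prob (regular_kgraph_process n k (d n))
        {es. \<forall>t::nat. real t \<le> (1 - \<epsilon> n) * real (n * d n div k) \<longrightarrow>
              (\<forall>v\<in>{1..n}.
                 let M = n * d n div k; \<tau> = 1 - real t / real M in
                 \<bar>real (Xt M es t v) - \<tau> * real (d n)\<bar> \<le> sqrt (a * \<tau> * real (d n) * ln (real n))
                 \<and> sqrt (a * \<tau> * real (d n) * ln (real n)) \<le> \<tau> * real (d n) / 2 - 1)})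
      \<longlonglongrightarrow> 1)"
proof -
  define a :: real where "a = 4 * (real k + 2)"
  define C :: real where "C = 16 * a * (4 * real k) ^ k"
  have apos: "a > 0" unfolding a_def by simp
  have main: "\<forall>(d::nat \<Rightarrow> nat) (\<epsilon>::nat \<Rightarrow> real).
    (\<forall>\<^sub>F n in sequentially.
        0 < d n \<and> k dvd n * d n \<and> 0 < \<epsilon> n \<and> \<epsilon> n < 1 \<and>
        (1 - \<epsilon> n) * real (n * d n div k) \<in> \<int> \<and>
        C * ((real (d n) / real n ^ (k - 1) + ln (real n) / real (d n)) powr (1/3) + 1 / real n)
          \<le> \<epsilon> n)
    \<longrightarrow>
    (\<lambda>n. measure_pmf.prob (regular_kgraph_process n k (d n)) (Ev n k (d n) (\<epsilon> n) a))
      \<longlonglongrightarrow> 1"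
  proof (intro allI impI)
    fix d :: "nat \<Rightarrow> nat" and \<epsilon> :: "nat \<Rightarrow> real"
    assume hyp: "\<forall>\<^sub>F n in sequentially.
        0 < d n \<and> k dvd n * d n \<and> 0 < \<epsilon> n \<and> \<epsilon> n < 1 \<and>
        (1 - \<epsilon> n) * real (n * d n div k) \<in> \<int> \<and>
        C * ((real (d n) / real n ^ (k - 1) + ln (real n) / real (d n)) powr (1/3) + 1 / real n)
          \<le> \<epsilon> n"
    have ev: "\<forall>\<^sub>F n in sequentially. 1 - 4 / real n \<le> measure_pmf.prob (regular_kgraph_process n k (d n)) (Ev n k (d n) (\<epsilon> n) a)"
      using hyp eventually_ge_at_top[of "4 * k"]
    proof eventually_elim
      case (elim n)
      show ?case
        by (rule main_n[OF a_def C_def assms]) (use elim in auto)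
    qed
    have ev2: "\<forall>\<^sub>F n in sequentially. measure_pmf.prob (regular_kgraph_process n k (d n)) (Ev n k (d n) (\<epsilon> n) a) \<le> 1"
      by (simp add: measure_pmf.prob_le_1)
    have l1: "(\<lambda>n. 1 - 4 / real n) \<longlonglongrightarrow> 1"
    proof -
      have "(\<lambda>n. 4 * (1 / real n)) \<longlonglongrightarrow> 4 * 0" by (intro tendsto_mult tendsto_const lim_inverse_n')
      hence "(\<lambda>n. 1 - 4 * (1 / real n)) \<longlonglongrightarrow> 1 - 4 * 0" by (intro tendsto_diff tendsto_const)
      thus ?thesis by simp
    qed
    show "(\<lambda>n. measure_pmf.prob (regular_kgraph_process n k (d n)) (Ev n k (d n) (\<epsilon> n) a)) \<longlonglongrightarrow> 1"
      by (rule real_tendsto_sandwich[OF ev ev2 l1 tendsto_const])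
  qed
  show ?thesis
    apply (rule exI[of _ a])
    apply (rule conjI[OF apos])
    apply (rule exI[of _ C])
    using main unfolding Ev_def by simp
qed


end
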